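(* Let $Q$ and $P$ be finite nonzero measures on $\mathbb{R}^n$ with densities $g$ and $f$ respectively with respect to some base measure $\mu$, i.e. $Q(B) = \int_B g(x)\,\mu(dx)$ and $P(B) = \int_B f(x)\,\mu(dx)$. Assume $\mathrm{supp}(f) = \mathrm{supp}(g)$, where $\mathrm{supp}(g) = \{x : g(x) \neq 0\}$, and that there is a constant $M$ with $f(x)/g(x) \le M$ for all $x \in \mathrm{supp}(g)$. Let $R \subseteq \mathbb{R}^+ \times \mathbb{R}^n$ be an exponential race with measure $Q$ and define \[ \mathrm{perturb}(t,x) = \Big(t\,\frac{g(x)}{f(x)},\; x\Big). \] Then $\mathrm{sort}(\mathrm{perturb}(R))$ is an exponential race with measure $P$, where $\mathrm{perturb}(R) = \{\mathrm{perturb}(t,x) : (t,x)\in R\}$ and $\mathrm{sort}$ totally orders points by the first coordinate (time).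
   Context: A random countable subset $\Pi$ of a Euclidean space is a Poisson process with $\sigma$-finite nonatomic mean measure $\nu$ if (1) for every Borel $B$, $\#(\Pi\cap B) \sim \mathrm{Poisson}(\nu(B))$, and (2) for disjoint Borel $A_1,\ldots,A_m$, the counts $\#(\Pi\cap A_j)$ are independent. Let $\lambda$ be Lebesgue measure on $\mathbb{R}^+=(0,\infty)$. For a finite nonzero measure $P$ on $\mathbb{R}^n$, an exponential race with measure $P$ is a random countable subset $R \subseteq \mathbb{R}^+ \times \mathbb{R}^n$ that is a Poisson process with mean measure $\lambda \times P$ and is totally ordered by its first coordinate (time), its points enumerated in increasing order of time. *)

theory Defs
  imports "HOL-Probability.Probability"
begin

definition npts :: "'b set \<Rightarrow> ennreal" where
  "npts S = emeasure (count_space UNIV) S"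

definition poisson_count :: "'w measure \<Rightarrow> ('w \<Rightarrow> ennreal) \<Rightarrow> ennreal \<Rightarrow> bool" where
  "poisson_count M N l \<longleftrightarrow>
     N \<in> borel_measurable M \<and>
     (if l = \<infinity> then (AE \<omega> in M. N \<omega> = \<infinity>)
      else (\<forall>k::nat. measure M {\<omega> \<in> space M. N \<omega> = of_nat k}
                     = exp (- enn2real l) * enn2real l ^ k / fact k))"

definition poisson_process ::
  "'w measure \<Rightarrow> ('w \<Rightarrow> ('b::topological_space) set) \<Rightarrow> 'b measure \<Rightarrow> bool" where
  "poisson_process M R nu \<longleftrightarrow>
     (\<forall>\<omega>\<in>space M. countable (R \<omega>)) \<and>
     (\<forall>B \<in> sets (borel :: 'b measure).
        poisson_count M (\<lambda>\<omega>. npts (R \<omega> \<inter> B)) (emeasure nu B)) \<and>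
     (\<forall>(m::nat) A. (\<forall>j<m. A j \<in> sets (borel :: 'b measure)) \<and> disjoint_family_on A {..<m}
        \<longrightarrow> prob_space.indep_vars M (\<lambda>_. borel) (\<lambda>j \<omega>. npts (R \<omega> \<inter> A j)) {..<m})"

definition lebesgue_pos :: "real measure" where
  "lebesgue_pos = density lborel (indicator {0<..})"

text \<open>Exponential race with measure P: Poisson process on R+ x R^n with mean
  measure lambda x P, totally ordered by time (almost surely).\<close>
definition exp_race ::
  "'w measure \<Rightarrow> ('w \<Rightarrow> (real \<times> 'a::euclidean_space) set) \<Rightarrow> 'a measure \<Rightarrow> bool" where
  "exp_race M R P \<longleftrightarrow>
     poisson_process M R (lebesgue_pos \<Otimes>\<^sub>M P) \<and>
     (AE \<omega> in M. R \<omega> \<subseteq> {0<..} \<times> UNIV \<and>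
                  (\<forall>p\<in>R \<omega>. \<forall>q\<in>R \<omega>. fst p = fst q \<longrightarrow> p = q))"

definition perturb :: "('a \<Rightarrow> real) \<Rightarrow> ('a \<Rightarrow> real) \<Rightarrow> real \<times> 'a \<Rightarrow> real \<times> 'a" where
  "perturb g f = (\<lambda>(t, x). (t * g x / f x, x))"

end

theory Submission
  imports Defs
begin

lemma npts_inj: "inj_on h S \<Longrightarrow> npts (h ` S) = npts S"
  unfolding npts_def
  by (cases "finite S") (auto simp: card_image finite_image_iff)

lemma npts_empty_iff: "npts S = 0 \<longleftrightarrow> S = {}"
  unfolding npts_def by (simp add: emeasure_count_space_eq_0)

lemma npts_min1: "min 1 (npts S) = (if S = {} then 0 else 1)"
proof (cases "S = {}")
  case True then show ?thesis by (simp add: npts_def)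
next
  case False
  then obtain x where "x \<in> S" by auto
  have "npts {x} \<le> npts S" unfolding npts_def using \<open>x\<in>S\<close>
    by (intro emeasure_mono) auto
  then have "1 \<le> npts S" by (simp add: npts_def)
  then show ?thesis using False by (simp add: min_def)
qed

lemma sep_finite:
  fixes b :: "nat \<Rightarrow> 'a set"
  assumes sep: "\<And>x y. x \<noteq> y \<Longrightarrow> \<exists>i. x \<in> b i \<and> y \<notin> b i"
    and F: "finite F"
  shows "\<exists>n. inj_on (\<lambda>x. {i. i < n \<and> x \<in> b i}) F"
proof -
  define ix where "ix = (\<lambda>(x,y). SOME i. x \<in> b i \<and> y \<notin> b i)"
  define n where "n = Suc (Max (ix ` (F \<times> F)))"
  have "inj_on (\<lambda>x. {i. i < n \<and> x \<in> b i}) F"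
  proof (rule inj_onI, rule ccontr)
    fix x y assume xy: "x \<in> F" "y \<in> F" "{i. i < n \<and> x \<in> b i} = {i. i < n \<and> y \<in> b i}" "x \<noteq> y"
    have s: "x \<in> b (ix (x,y)) \<and> y \<notin> b (ix (x,y))"
      unfolding ix_def using someI_ex[OF sep[OF xy(4)]] by simp
    have "ix (x,y) \<le> Max (ix ` (F \<times> F))" using F xy by (intro Max_ge) auto
    then have "ix (x,y) < n" by (simp add: n_def)
    then show False using xy(3) s by blast
  qed
  then show ?thesis by blast
qed

lemma npts_SUP_sig:
  fixes b :: "nat \<Rightarrow> 'a set"
  assumes sep: "\<And>x y. x \<noteq> y \<Longrightarrow> \<exists>i. x \<in> b i \<and> y \<notin> b i"
  shows "npts Y = (SUP n. of_nat (card ((\<lambda>x. {i. i < n \<and> x \<in> b i}) ` Y)))"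
proof -
  let ?s = "\<lambda>n x. {i. i < n \<and> x \<in> b i}"
  have fin: "finite (?s n ` Y)" for n
    by (rule finite_subset[of _ "Pow {..<n}"]) auto
  have le: "of_nat (card (?s n ` Y)) \<le> npts Y" for n
  proof (cases "finite Y")
    case True then show ?thesis unfolding npts_def by (simp add: card_image_le)
  next
    case False then show ?thesis unfolding npts_def by simp
  qed
  have ge: "\<exists>n. card F \<le> card (?s n ` Y)" if FF: "finite F" "F \<subseteq> Y" for F
  proof -
    obtain n where n: "inj_on (?s n) F" using sep_finite[OF sep FF(1)] by blast
    have "card F = card (?s n ` F)" using n by (simp add: card_image)
    also have "\<dots> \<le> card (?s n ` Y)" using fin FF by (intro card_mono image_mono) auto
    finally show ?thesis by blast
  qed
  show ?thesis
  proof (rule antisym)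
    show "(SUP n. of_nat (card (?s n ` Y))) \<le> npts Y" by (rule SUP_least) (rule le)
  next
    show "npts Y \<le> (SUP n. of_nat (card (?s n ` Y)))"
    proof (cases "finite Y")
      case True
      then obtain n where "card Y \<le> card (?s n ` Y)" using ge[of Y] by blast
      then have "npts Y \<le> of_nat (card (?s n ` Y))" using True by (simp add: npts_def)
      also have "\<dots> \<le> (SUP n. of_nat (card (?s n ` Y)))" by (rule SUP_upper) simp
      finally show ?thesis .
    next
      case False
      have "(SUP n. of_nat (card (?s n ` Y)) :: ennreal) = top"
      proof (rule ennreal_SUP_eq_top)
        fix k :: nat
        obtain F where "finite F" "card F = k" "F \<subseteq> Y"
          using infinite_arbitrarily_large[OF False] by blast
        then obtain n where "k \<le> card (?s n ` Y)" using ge by blast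
        then show "\<exists>i\<in>UNIV. of_nat k \<le> (of_nat (card (?s i ` Y)) :: ennreal)"
          by auto
      qed
      then show ?thesis by (metis top_greatest)
    qed
  qed
qed
lemma sum_if_card: "finite A \<Longrightarrow> (\<Sum>T\<in>A. (if P T then 0 else 1 :: ennreal)) = of_nat (card {T\<in>A. \<not> P T})"
  by (simp add: sum.If_cases Int_def)

lemma proj_count_measurable:
  fixes R :: "'w \<Rightarrow> ('c::topological_space \<times> 'a::euclidean_space) set"
  assumes meas: "\<And>B. B \<in> sets borel \<Longrightarrow> (\<lambda>\<omega>. npts (R \<omega> \<inter> B)) \<in> borel_measurable M"
    and Z: "Z \<in> sets borel"
  shows "(\<lambda>\<omega>. npts (snd ` (R \<omega> \<inter> (UNIV \<times> Z)))) \<in> borel_measurable M"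
proof -
  obtain BB :: "'a set set" where BB: "countable BB" "topological_basis BB"
    using ex_countable_basis by blast
  have "BB \<noteq> {}"
  proof
    assume "BB = {}"
    obtain V where "V \<in> BB" using topological_basisE[OF BB(2), of UNIV 0] by auto
    then show False using \<open>BB = {}\<close> by simp
  qed
  define b where "b = from_nat_into BB"
  have bB: "b i \<in> BB" for i unfolding b_def using \<open>BB \<noteq> {}\<close> by (rule from_nat_into)
  have bopen: "open (b i)" for i using bB BB(2) topological_basis_open by blast
  then have bborel[measurable]: "b i \<in> sets borel" for i by simp
  have sep: "\<exists>i. x \<in> b i \<and> y \<notin> b i" if xy: "x \<noteq> y" for x y :: 'a
  proof -
    have "open (- {y})" by auto
    then obtain V where V: "V \<in> BB" "x \<in> V" "V \<subseteq> - {y}"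
      using topological_basisE[OF BB(2) \<open>open (- {y})\<close>, of x] xy by blast
    then obtain i where "V = b i" unfolding b_def
      using range_from_nat_into[OF \<open>BB \<noteq> {}\<close> BB(1)] by (metis rangeE)
    then show ?thesis using V by auto
  qed
  let ?s = "\<lambda>n x. {i. i < n \<and> x \<in> b i}"
  define At where "At n T = {x. ?s n x = T}" for n T
  have At_borel: "At n T \<in> sets borel" if "T \<subseteq> {..<n}" for n T
  proof -
    have "At n T = {x \<in> space borel. \<forall>i\<in>{..<n}. (x \<in> b i \<longleftrightarrow> i \<in> T)}"
      using that unfolding At_def by auto
    also have "\<dots> \<in> sets borel" by measurable
    finally show ?thesis .
  qed
  define h where "h n \<omega> = (\<Sum>T\<in>Pow {..<n}. min 1 (npts (R \<omega> \<inter> (UNIV \<times> (Z \<inter> At n T)))))" for n \<omega>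
  have hm: "h n \<in> borel_measurable M" for n
    unfolding h_def
    by (intro borel_measurable_sum borel_measurable_min borel_measurable_const meas)
       (use At_borel Z in \<open>auto intro!: borel_Times\<close>)
  have heq: "h n \<omega> = of_nat (card (?s n ` snd ` (R \<omega> \<inter> (UNIV \<times> Z))))" for n \<omega>
  proof -
    have "h n \<omega> = (\<Sum>T\<in>Pow {..<n}. (if R \<omega> \<inter> (UNIV \<times> (Z \<inter> At n T)) = {} then 0 else 1))"
      unfolding h_def npts_min1 ..
    also have "\<dots> = of_nat (card {T\<in>Pow {..<n}. R \<omega> \<inter> (UNIV \<times> (Z \<inter> At n T)) \<noteq> {}})"
      by (rule sum_if_card) simp
    also have "{T\<in>Pow {..<n}. R \<omega> \<inter> (UNIV \<times> (Z \<inter> At n T)) \<noteq> {}} = ?s n ` snd ` (R \<omega> \<inter> (UNIV \<times> Z))"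
      unfolding At_def by (auto simp: image_iff) (force+)
    finally show ?thesis .
  qed
  have "(\<lambda>\<omega>. npts (snd ` (R \<omega> \<inter> (UNIV \<times> Z)))) = (\<lambda>\<omega>. SUP n. h n \<omega>)"
    using npts_SUP_sig[OF sep] heq by (auto simp: fun_eq_iff)
  also have "\<dots> \<in> borel_measurable M" using hm by measurable
  finally show ?thesis .
qed


lemma indep_vars_AE:
  assumes P: "prob_space M" and ind: "prob_space.indep_vars M (\<lambda>_. borel) X I"
    and Ym: "\<And>i. i \<in> I \<Longrightarrow> Y i \<in> borel_measurable M"
    and ae: "\<And>i. i \<in> I \<Longrightarrow> AE \<omega> in M. X i \<omega> = Y i \<omega>"
    and fin: "finite I"
  shows "prob_space.indep_vars M (\<lambda>_. (borel :: 'b::topological_space measure)) Y I"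
proof -
  interpret prob_space M by fact
  show ?thesis
  proof (cases "I = {}")
    case True then show ?thesis
      by (simp add: indep_vars_def indep_sets_def)
  next
    case False
    have Xm: "\<And>i. i \<in> I \<Longrightarrow> X i \<in> borel_measurable M"
      using ind unfolding indep_vars_def by auto
    have eq1: "distr M (\<Pi>\<^sub>M i\<in>I. borel) (\<lambda>x. \<lambda>i\<in>I. Y i x) = distr M (\<Pi>\<^sub>M i\<in>I. borel) (\<lambda>x. \<lambda>i\<in>I. X i x)"
    proof (rule distr_cong_AE)
      have "AE x in M. \<forall>i\<in>I. X i x = Y i x" using fin ae by (rule AE_finite_allI)
      then show "AE x in M. (\<lambda>i\<in>I. Y i x) = (\<lambda>i\<in>I. X i x)"
        by eventually_elim (auto simp: fun_eq_iff)
    qed (auto intro!: measurable_restrict Xm Ym)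
    have eq2: "distr M borel (Y i) = distr M borel (X i)" if "i \<in> I" for i
      by (rule distr_cong_AE) (use ae[OF that] Xm[OF that] Ym[OF that] in auto)
    have "indep_vars (\<lambda>_. borel) X I" by (rule ind)
    then have "distr M (\<Pi>\<^sub>M i\<in>I. borel) (\<lambda>x. \<lambda>i\<in>I. X i x) = (\<Pi>\<^sub>M i\<in>I. distr M borel (X i))"
      using indep_vars_iff_distr_eq_PiM'[OF False, where M'="\<lambda>_. borel" and X=X] Xm by simp
    then have "distr M (\<Pi>\<^sub>M i\<in>I. borel) (\<lambda>x. \<lambda>i\<in>I. Y i x) = (\<Pi>\<^sub>M i\<in>I. distr M borel (Y i))"
      using eq1 eq2 by (simp cong: PiM_cong)
    then show ?thesis
      using indep_vars_iff_distr_eq_PiM'[OF False, where M'="\<lambda>_. borel" and X=Y] Ym by simp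
  qed
qed

lemma poisson_count_AE:
  assumes "poisson_count M N l" "N' \<in> borel_measurable M" "AE \<omega> in M. N \<omega> = N' \<omega>"
  shows "poisson_count M N' l"
proof -
  have Nm[measurable]: "N \<in> borel_measurable M" using assms(1) unfolding poisson_count_def by simp
  note assms(2)[measurable]
  have "measure M {\<omega> \<in> space M. N' \<omega> = of_nat k} = measure M {\<omega> \<in> space M. N \<omega> = of_nat k}" for k
    by (rule measure_eq_AE) (use assms(3) in \<open>auto\<close>)
  moreover have "(AE \<omega> in M. N \<omega> = \<infinity>) \<longleftrightarrow> (AE \<omega> in M. N' \<omega> = \<infinity>)"
    using assms(3) by (auto elim: AE_mp)
  ultimately show ?thesis using assms(1,2) unfolding poisson_count_def
    by (cases "l = \<infinity>") (simp_all only: if_True if_False simp_thms)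
qed

lemma poisson_ge2:
  assumes P: "prob_space M" and pc: "poisson_count M N (ennreal a)" and a: "a \<ge> 0"
  shows "measure M {\<omega> \<in> space M. N \<omega> \<noteq> 0 \<and> N \<omega> \<noteq> 1} \<le> a\<^sup>2"
proof -
  interpret prob_space M by fact
  have Nm[measurable]: "N \<in> borel_measurable M" using pc unfolding poisson_count_def by simp
  have p0: "prob {\<omega> \<in> space M. N \<omega> = 0} = exp (- a)"
    using pc[unfolded poisson_count_def] a by (auto dest: spec[of _ 0])
  have p1: "prob {\<omega> \<in> space M. N \<omega> = 1} = exp (- a) * a"
    using pc[unfolded poisson_count_def] a by (auto dest: spec[of _ 1])
  let ?A = "{\<omega> \<in> space M. N \<omega> = 0}" and ?B = "{\<omega> \<in> space M. N \<omega> = 1}"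
    and ?C = "{\<omega> \<in> space M. N \<omega> \<noteq> 0 \<and> N \<omega> \<noteq> 1}"
  have "prob (?A \<union> ?B \<union> ?C) = prob (?A \<union> ?B) + prob ?C"
    by (intro finite_measure_Union) auto
  moreover have "prob (?A \<union> ?B) = prob ?A + prob ?B"
    by (intro finite_measure_Union) auto
  moreover have "?A \<union> ?B \<union> ?C = space M" by auto
  ultimately have "prob ?C = 1 - exp (- a) - exp (- a) * a" using p0 p1 prob_space by simp
  moreover have "exp (- a) \<ge> 1 - a" using exp_ge_add_one_self[of "-a"] by simp
  moreover have "exp (- a) > 0" by simp
  ultimately have e: "exp (- a) * (1 + a) \<ge> (1 - a) * (1 + a)" using a
    by (intro mult_right_mono) auto
  have "(1 - a) * (1 + a) = 1 - a\<^sup>2" by (simp add: algebra_simps power2_eq_square)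
  moreover have "exp (- a) * (1 + a) = exp (- a) + exp (- a) * a" by (simp add: algebra_simps)
  ultimately show ?thesis using e \<open>prob ?C = 1 - exp (- a) - exp (- a) * a\<close> by linarith
qed

lemma lebesgue_pos_emeasure:
  "S \<in> sets borel \<Longrightarrow> emeasure lebesgue_pos S = emeasure lborel (S \<inter> {0<..})"
proof -
  assume S: "S \<in> sets borel"
  have *: "\<And>x. indicator {0<..} x * indicator S x = (indicator (S \<inter> {0<..}) x :: ennreal)"
    by (auto split: split_indicator)
  show ?thesis unfolding lebesgue_pos_def
    using S by (subst emeasure_density) (auto simp: * )
qed

lemma sets_lebesgue_pos[simp, measurable_cong]: "sets lebesgue_pos = sets borel"
  by (simp add: lebesgue_pos_def)

lemma space_lebesgue_pos[simp]: "space lebesgue_pos = UNIV"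
  by (simp add: lebesgue_pos_def)

lemma sigma_finite_lebesgue_pos: "sigma_finite_measure lebesgue_pos"
  unfolding lebesgue_pos_def
  by (subst sigma_finite_measure.sigma_finite_iff_density_finite[OF sigma_finite_lborel]) (auto simp: indicator_def)


lemma fst_borel[measurable]: "fst \<in> borel_measurable (borel :: ('a::topological_space \<times> 'b::topological_space) measure)"
  by (intro borel_measurable_continuous_onI continuous_on_fst continuous_on_id)

lemma snd_borel[measurable]: "snd \<in> borel_measurable (borel :: ('a::topological_space \<times> 'b::topological_space) measure)"
  by (intro borel_measurable_continuous_onI continuous_on_snd continuous_on_id)

lemma lebesgue_pos_scale:
  assumes r: "r > 0" and S: "S \<in> sets borel"
  shows "emeasure lebesgue_pos ((\<lambda>t. r * t) -` S) = ennreal (inverse r) * emeasure lebesgue_pos S"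
proof -
  have "(\<lambda>t. r * t) \<in> borel_measurable (borel :: real measure)" by measurable
  from measurable_sets[OF this S] have S': "(\<lambda>t. r * t) -` S \<in> sets borel" by simp
  have "(\<lambda>t. r * t) -` S \<inter> {0<..} = (\<lambda>t. r * t) -` (S \<inter> {0<..}) \<inter> space lborel"
    using r by (auto simp: zero_less_mult_iff)
  then have "emeasure lebesgue_pos ((\<lambda>t. r * t) -` S) = emeasure (distr lborel borel ((*) r)) (S \<inter> {0<..})"
    using S S' by (subst emeasure_distr) (auto simp: lebesgue_pos_emeasure)
  also have "\<dots> = ennreal (inverse r) * emeasure lborel (S \<inter> {0<..})"
    using r S by (simp add: lborel_distr_mult emeasure_density_const)
  finally show ?thesis using S by (simp add: lebesgue_pos_emeasure)
qed

lemma pair_preimage: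
  fixes \<mu> :: "'a::euclidean_space measure" and f g :: "'a \<Rightarrow> real"
  assumes s\<mu>: "sets \<mu> = sets borel"
    and fm: "f \<in> borel_measurable \<mu>" and gm: "g \<in> borel_measurable \<mu>"
    and f0: "\<And>x. f x \<ge> 0" and g0: "\<And>x. g x \<ge> 0"
    and Qfin: "emeasure (density \<mu> (\<lambda>x. ennreal (g x))) UNIV < \<infinity>"
    and Pfin: "emeasure (density \<mu> (\<lambda>x. ennreal (f x))) UNIV < \<infinity>"
    and supp: "{x. f x \<noteq> 0} = {x. g x \<noteq> 0}"
    and B: "B \<in> sets borel"
  shows "emeasure (lebesgue_pos \<Otimes>\<^sub>M density \<mu> (\<lambda>x. ennreal (g x))) (perturb g f -` B \<inter> {p. g (snd p) \<noteq> 0})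
       = emeasure (lebesgue_pos \<Otimes>\<^sub>M density \<mu> (\<lambda>x. ennreal (f x))) B"
proof -
  let ?Q = "density \<mu> (\<lambda>x. ennreal (g x))" and ?P = "density \<mu> (\<lambda>x. ennreal (f x))"
  have sp\<mu>: "space \<mu> = UNIV" using sets_eq_imp_space_eq[OF s\<mu>] by simp
  have fb[measurable]: "f \<in> borel_measurable borel" using fm by (simp add: measurable_cong_sets[OF s\<mu> refl])
  have gb[measurable]: "g \<in> borel_measurable borel" using gm by (simp add: measurable_cong_sets[OF s\<mu> refl])
  have finQ: "finite_measure ?Q" using Qfin by (intro finite_measureI) (simp add: sp\<mu>)
  have finP: "finite_measure ?P" using Pfin by (intro finite_measureI) (simp add: sp\<mu>)
  interpret PQ: pair_sigma_finite lebesgue_pos ?Q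
    by (intro pair_sigma_finite.intro sigma_finite_lebesgue_pos finite_measure.axioms(1) finQ)
  interpret PP: pair_sigma_finite lebesgue_pos ?P
    by (intro pair_sigma_finite.intro sigma_finite_lebesgue_pos finite_measure.axioms(1) finP)
  have setsQ: "sets (lebesgue_pos \<Otimes>\<^sub>M ?Q) = sets (borel :: (real \<times> 'a) measure)"
    using s\<mu> by (simp add: borel_prod[symmetric] cong: sets_pair_measure_cong)
  have setsP: "sets (lebesgue_pos \<Otimes>\<^sub>M ?P) = sets (borel :: (real \<times> 'a) measure)"
    using s\<mu> by (simp add: borel_prod[symmetric] cong: sets_pair_measure_cong)
  have pm[measurable]: "perturb g f \<in> borel_measurable borel"
    unfolding perturb_def by measurable
  define C where "C = perturb g f -` B \<inter> {p. g (snd p) \<noteq> 0}"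
  have C: "C \<in> sets borel" unfolding C_def using B by measurable
  have "emeasure (lebesgue_pos \<Otimes>\<^sub>M ?Q) C = (\<integral>\<^sup>+y. emeasure lebesgue_pos ((\<lambda>x. (x, y)) -` C) \<partial>?Q)"
    using C setsQ by (intro PQ.emeasure_pair_measure_alt2) simp
  also have "\<dots> = (\<integral>\<^sup>+y. ennreal (g y) * emeasure lebesgue_pos ((\<lambda>x. (x, y)) -` C) \<partial>\<mu>)"
    using PQ.measurable_emeasure_Pair2[of C] C setsQ
    by (intro nn_integral_density) (auto simp: measurable_cong_sets[OF s\<mu> refl] intro: gm)
  also have "\<dots> = (\<integral>\<^sup>+y. ennreal (f y) * emeasure lebesgue_pos ((\<lambda>x. (x, y)) -` B) \<partial>\<mu>)"
  proof (rule nn_integral_cong)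
    fix y
    have "(\<lambda>x. (x, y)) \<in> (borel :: real measure) \<rightarrow>\<^sub>M (borel :: (real \<times> 'a) measure)" by measurable
    from measurable_sets[OF this B] have By: "(\<lambda>x. (x, y)) -` B \<in> sets borel" by simp
    show "ennreal (g y) * emeasure lebesgue_pos ((\<lambda>x. (x, y)) -` C) = ennreal (f y) * emeasure lebesgue_pos ((\<lambda>x. (x, y)) -` B)"
    proof (cases "g y = 0")
      case True
      then have "f y = 0" using supp by auto
      then show ?thesis using True by simp
    next
      case False
      have "f y \<noteq> 0" using False supp by blast
      then have fy: "f y > 0" and gy: "g y > 0" using False f0[of y] g0[of y] by auto
      define r where "r = g y / f y"
      have r: "r > 0" using fy gy by (simp add: r_def)
      have "(\<lambda>x. (x, y)) -` C = (\<lambda>t. r * t) -` ((\<lambda>x. (x, y)) -` B)"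
        using False unfolding C_def perturb_def r_def by (auto simp: field_simps)
      then have "emeasure lebesgue_pos ((\<lambda>x. (x, y)) -` C) = ennreal (inverse r) * emeasure lebesgue_pos ((\<lambda>x. (x, y)) -` B)"
        using lebesgue_pos_scale[OF r By] by simp
      moreover have "ennreal (g y) * ennreal (inverse r) = ennreal (f y)"
        using fy gy by (simp add: r_def ennreal_mult[symmetric])
      ultimately show ?thesis by (simp add: mult.assoc[symmetric])
    qed
  qed
  also have "\<dots> = (\<integral>\<^sup>+y. emeasure lebesgue_pos ((\<lambda>x. (x, y)) -` B) \<partial>?P)"
    using PP.measurable_emeasure_Pair2[of B] B setsP
    by (intro nn_integral_density[symmetric]) (auto simp: measurable_cong_sets[OF s\<mu> refl] intro: fm)
  also have "\<dots> = emeasure (lebesgue_pos \<Otimes>\<^sub>M ?P) B"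
    using B setsP by (intro PP.emeasure_pair_measure_alt2[symmetric]) simp
  finally show ?thesis unfolding C_def .
qed


lemma interval_pick:
  fixes s :: real and T n :: nat
  assumes s: "0 < s" "s \<le> real T" and n: "n > 0"
  shows "\<exists>k<n. real T * real k / real n < s \<and> s \<le> real T * (real k + 1) / real n"
proof -
  have T: "real T > 0" using s by simp
  define m where "m = \<lceil>s * real n / real T\<rceil>"
  have x0: "s * real n / real T > 0" using s T n by simp
  have m1: "m \<ge> 1" unfolding m_def using x0 by (simp add: one_le_ceiling)  
  have "s * real n / real T \<le> real n" using s T by (simp add: field_simps mult_right_mono)
  then have mn: "m \<le> int n" unfolding m_def by (simp add: ceiling_le_iff)
  define k where "k = nat m - 1"
  have km: "real k + 1 = real_of_int m" using m1 unfolding k_def by (simp add: of_nat_diff)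
  have k_eq: "real k = real_of_int m - 1" using km by simp
  have "k < n" using mn m1 unfolding k_def by linarith
  moreover have "real_of_int m - 1 < s * real n / real T" unfolding m_def by linarith
  then have "real T * real k / real n < s" using T n by (simp add: k_eq field_simps)
  moreover have "s * real n / real T \<le> real_of_int m" unfolding m_def by (rule le_of_int_ceiling)
  then have "s \<le> real T * (real k + 1) / real n" using km T n by (simp add: field_simps)
  ultimately show ?thesis by blast
qed

lemma real_le_all_inv_zero:
  fixes x K :: real
  assumes "x \<ge> 0" "\<And>n::nat. x \<le> K / real (Suc n)"
  shows "x = 0"
proof (rule ccontr)
  assume "x \<noteq> 0" then have x: "x > 0" using assms(1) by simp
  obtain n :: nat where "K < real n * x" using ex_less_of_nat_mult[OF x] by blast
  moreover have "x * real (Suc n) \<le> K" using assms(2)[of n] by (simp add: field_simps)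
  ultimately show False using x by (simp add: algebra_simps)
qed

lemma distinct_times:
  fixes R :: "'w \<Rightarrow> (real \<times> 'a::euclidean_space) set" and P :: "'a measure"
  assumes PM: "prob_space M" and pp: "poisson_process M R (lebesgue_pos \<Otimes>\<^sub>M P)"
    and sP: "sets P = sets borel" and Pfin: "emeasure P UNIV < \<infinity>"
    and pos: "AE \<omega> in M. R \<omega> \<subseteq> {0<..} \<times> UNIV"
  shows "AE \<omega> in M. \<forall>p\<in>R \<omega>. \<forall>q\<in>R \<omega>. fst p = fst q \<longrightarrow> p = q"
proof -
  interpret prob_space M by fact
  have spP: "space P = UNIV" using sets_eq_imp_space_eq[OF sP] by simp
  interpret P: finite_measure P using Pfin by (intro finite_measureI) (simp add: spP)
  define c where "c = enn2real (emeasure P UNIV)"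
  have c: "emeasure P UNIV = ennreal c" "c \<ge> 0" using Pfin by (auto simp: c_def ennreal_enn2real_if)
  define I where "I T n k = {real T * real k / real n <.. real T * (real k + 1) / real n} \<times> (UNIV :: 'a set)" for T n k :: nat
  have Ib: "I T n k \<in> sets borel" for T n k unfolding I_def by (intro borel_Times) auto
  have nuI: "emeasure (lebesgue_pos \<Otimes>\<^sub>M P) (I T n k) = ennreal (real T / real n * c)" if "n > 0" for T n k
  proof -
    have "emeasure (lebesgue_pos \<Otimes>\<^sub>M P) (I T n k)
        = emeasure lebesgue_pos {real T * real k / real n <.. real T * (real k + 1) / real n} * emeasure P UNIV"
      unfolding I_def by (intro P.emeasure_pair_measure_Times) (auto simp: sP)
    also have "emeasure lebesgue_pos {real T * real k / real n <.. real T * (real k + 1) / real n}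
        = ennreal (real T / real n)"
    proof -
      have "{real T * real k / real n <.. real T * (real k + 1) / real n} \<inter> {0<..}
          = {real T * real k / real n <.. real T * (real k + 1) / real n}"
        using that by (auto intro: order.strict_trans1[of 0 "real T * real k / real n"])
      moreover have "real T * (real k + 1) / real n - real T * real k / real n = real T / real n"
        by (simp add: diff_divide_distrib[symmetric] algebra_simps)
      moreover have "real T * real k / real n \<le> real T * (real k + 1) / real n"
        using that by (intro divide_right_mono mult_left_mono) auto
      ultimately show ?thesis by (simp add: lebesgue_pos_emeasure)
    qed
    finally show ?thesis using c by (simp add: ennreal_mult[symmetric])
  qed
  define N where "N T n k \<omega> = npts (R \<omega> \<inter> I T n k)" for T n k \<omega>
  have pcN: "poisson_count M (N T n k) (ennreal (real T / real n * c))" if "n > 0" for T n k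
    using pp Ib nuI[OF that] unfolding poisson_process_def N_def by metis
  have Nm[measurable]: "N T n k \<in> borel_measurable M" for T n k
    using pp Ib unfolding poisson_process_def poisson_count_def N_def by blast
  define E where "E T n = (\<Union>k<n. {\<omega> \<in> space M. N T n k \<omega> \<noteq> 0 \<and> N T n k \<omega> \<noteq> 1})" for T n
  have Em: "E T n \<in> events" for T n unfolding E_def by measurable
  have Ep: "prob (E T n) \<le> (real T * c)\<^sup>2 / real n" if "n > 0" for T n
  proof -
    have "prob (E T n) \<le> (\<Sum>k<n. prob {\<omega> \<in> space M. N T n k \<omega> \<noteq> 0 \<and> N T n k \<omega> \<noteq> 1})"
      unfolding E_def by (intro finite_measure_subadditive_finite) auto
    also have "\<dots> \<le> (\<Sum>k<n. (real T / real n * c)\<^sup>2)"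
      by (intro sum_mono poisson_ge2[OF PM pcN[OF that]]) (use c in simp)
    also have "\<dots> = (real T * c)\<^sup>2 / real n"
      using that by (simp add: power2_eq_square field_simps)
    finally show ?thesis .
  qed
  define NT where "NT T = (\<Inter>n. E T (Suc n))" for T
  have NTnull: "NT T \<in> null_sets M" for T
  proof -
    have NTm: "NT T \<in> events" unfolding NT_def using Em by auto
    have "prob (NT T) \<le> (real T * c)\<^sup>2 / real (Suc n)" for n
    proof -
      have "prob (NT T) \<le> prob (E T (Suc n))" unfolding NT_def using Em by (intro finite_measure_mono) auto
      then show ?thesis using Ep[of "Suc n" T] by simp
    qed
    then have "prob (NT T) = 0" by (intro real_le_all_inv_zero) auto
    then show ?thesis using NTm by (simp add: emeasure_eq_measure null_sets_def)
  qed
  have NNnull: "(\<Union>T. NT T) \<in> null_sets M" using NTnull by auto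
  have "AE \<omega> in M. \<omega> \<notin> (\<Union>T. NT T)" using NNnull by (rule AE_not_in)
  then show ?thesis using pos AE_space
  proof eventually_elim
    case (elim \<omega>)
    show ?case
    proof (intro ballI impI, rule ccontr)
      fix p q assume pq: "p \<in> R \<omega>" "q \<in> R \<omega>" "fst p = fst q" "p \<noteq> q"
      define s where "s = fst p"
      have s0: "s > 0" using elim(2) pq unfolding s_def by auto
      define T where "T = nat \<lceil>s\<rceil>"
      have sT: "s \<le> real T" unfolding T_def by linarith
      have "\<omega> \<in> NT T"
        unfolding NT_def
      proof
        fix n0 assume "n0 \<in> (UNIV :: nat set)"
        obtain k where k: "k < Suc n0" "real T * real k / real (Suc n0) < s"
            "s \<le> real T * (real k + 1) / real (Suc n0)"
          using interval_pick[OF s0 sT, of "Suc n0"] by auto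
        have sub: "{p, q} \<subseteq> R \<omega> \<inter> I T (Suc n0) k"
          using pq k unfolding I_def s_def by (auto simp: mem_Times_iff)
        have "npts {p, q} \<le> N T (Suc n0) k \<omega>" unfolding N_def npts_def
          using sub by (intro emeasure_mono) auto
        moreover have "npts {p, q} = 2" using pq(4) by (simp add: npts_def)
        ultimately have "N T (Suc n0) k \<omega> \<noteq> 0 \<and> N T (Suc n0) k \<omega> \<noteq> 1"
          by (auto simp: one_less_numeral_iff)
        then show "\<omega> \<in> E T (Suc n0)" unfolding E_def using k(1) elim by auto
      qed
      then show False using elim(1) by auto
    qed
  qed
qed


theorem lemma5:
  fixes M :: "'w measure"
    and R :: "'w \<Rightarrow> (real \<times> 'a::euclidean_space) set"
    and \<mu> :: "'a measure"
    and f g :: "'a \<Rightarrow> real"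
    and Mc :: real
  assumes "prob_space M"
    and "sets \<mu> = sets borel"
    and "f \<in> borel_measurable \<mu>" and "g \<in> borel_measurable \<mu>"
    and "\<And>x. f x \<ge> 0" and "\<And>x. g x \<ge> 0"
    and "emeasure (density \<mu> (\<lambda>x. ennreal (g x))) UNIV < \<infinity>"
    and "emeasure (density \<mu> (\<lambda>x. ennreal (g x))) UNIV \<noteq> 0"
    and "emeasure (density \<mu> (\<lambda>x. ennreal (f x))) UNIV < \<infinity>"
    and "emeasure (density \<mu> (\<lambda>x. ennreal (f x))) UNIV \<noteq> 0"
    and "{x. f x \<noteq> 0} = {x. g x \<noteq> 0}"
    and "\<And>x. g x \<noteq> 0 \<Longrightarrow> f x / g x \<le> Mc"
    and "exp_race M R (density \<mu> (\<lambda>x. ennreal (g x)))"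
  shows "exp_race M (\<lambda>\<omega>. perturb g f ` R \<omega>) (density \<mu> (\<lambda>x. ennreal (f x)))"
proof -
  note PM = assms(1) and s\<mu> = assms(2) and fm = assms(3) and gm = assms(4)
    and f0 = assms(5) and g0 = assms(6) and Qfin = assms(7) and Pfin = assms(9)
    and supp = assms(11) and race = assms(13)
  interpret prob_space M by fact
  let ?Q = "density \<mu> (\<lambda>x. ennreal (g x))" and ?P = "density \<mu> (\<lambda>x. ennreal (f x))"
  let ?pt = "perturb g f"
  have sp\<mu>: "space \<mu> = UNIV" using sets_eq_imp_space_eq[OF s\<mu>] by simp
  have fb[measurable]: "f \<in> borel_measurable borel" using fm by (simp add: measurable_cong_sets[OF s\<mu> refl])
  have gb[measurable]: "g \<in> borel_measurable borel" using gm by (simp add: measurable_cong_sets[OF s\<mu> refl])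
  have pm[measurable]: "perturb g f \<in> borel_measurable borel"
    unfolding perturb_def by measurable
  interpret Qf: finite_measure ?Q using Qfin by (intro finite_measureI) (simp add: sp\<mu>)
  have ppR: "poisson_process M R (lebesgue_pos \<Otimes>\<^sub>M ?Q)" and posR: "AE \<omega> in M. R \<omega> \<subseteq> {0<..} \<times> UNIV"
    using race unfolding exp_race_def by auto
  have Rcount: "\<And>\<omega>. \<omega> \<in> space M \<Longrightarrow> countable (R \<omega>)"
    and Rpc: "\<And>B. B \<in> sets borel \<Longrightarrow> poisson_count M (\<lambda>\<omega>. npts (R \<omega> \<inter> B)) (emeasure (lebesgue_pos \<Otimes>\<^sub>M ?Q) B)"
    and Rind: "\<And>(m::nat) A. (\<forall>j<m. A j \<in> sets borel) \<and> disjoint_family_on A {..<m} \<Longrightarrow>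
        indep_vars (\<lambda>_. borel) (\<lambda>j \<omega>. npts (R \<omega> \<inter> A j)) {..<m}"
    using ppR unfolding poisson_process_def by blast+
  have Rm: "\<And>B. B \<in> sets borel \<Longrightarrow> (\<lambda>\<omega>. npts (R \<omega> \<inter> B)) \<in> borel_measurable M"
    using Rpc unfolding poisson_count_def by blast

  define Z0 where "Z0 = {0::real<..} \<times> {x. g x = 0}"
  have Z0b: "Z0 \<in> sets borel" unfolding Z0_def by (intro borel_Times) auto
  have "emeasure ?Q {x. g x = 0} = 0"
  proof -
    have "{x. g x = 0} \<in> sets \<mu>" using s\<mu> by simp
    have "emeasure ?Q {x. g x = 0} = (\<integral>\<^sup>+x. ennreal (g x) * indicator {x. g x = 0} x \<partial>\<mu>)"
    proof -
      have "(\<lambda>x. ennreal (g x)) \<in> borel_measurable \<mu>" using gm by measurable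
      then show ?thesis using \<open>{x. g x = 0} \<in> sets \<mu>\<close> by (subst emeasure_density) auto
    qed
    also have "\<dots> = (\<integral>\<^sup>+x. 0 \<partial>\<mu>)" by (intro nn_integral_cong) (auto split: split_indicator)
    finally show ?thesis by simp
  qed
  then have nuZ0: "emeasure (lebesgue_pos \<Otimes>\<^sub>M ?Q) Z0 = 0"
    unfolding Z0_def by (subst Qf.emeasure_pair_measure_Times) (auto simp: s\<mu>)
  have "prob {\<omega> \<in> space M. npts (R \<omega> \<inter> Z0) = 0} = 1"
    using Rpc[OF Z0b] unfolding nuZ0 poisson_count_def by (auto dest: spec[of _ 0])
  then have "AE \<omega> in M. \<omega> \<in> {\<omega> \<in> space M. npts (R \<omega> \<inter> Z0) = 0}" by (rule AE_prob_1)
  then have Om: "AE \<omega> in M. R \<omega> \<subseteq> {0<..} \<times> {x. g x \<noteq> 0}"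
    using posR
  proof eventually_elim
    case (elim \<omega>)
    then have "R \<omega> \<inter> Z0 = {}" by (simp add: npts_empty_iff)
    then show ?case using elim(2) unfolding Z0_def by auto
  qed

  define C where "C B = ?pt -` B \<inter> {p. g (snd p) \<noteq> 0}" for B :: "(real \<times> 'a) set"
  define ZB where "ZB B = {x. g x = 0 \<and> (0, x) \<in> B}" for B :: "(real \<times> 'a) set"
  have Cb: "C B \<in> sets borel" if "B \<in> sets borel" for B unfolding C_def using that by measurable
  have ZBb: "ZB B \<in> sets borel" if "B \<in> sets borel" for B
  proof -
    have "(\<lambda>x::'a. (0::real, x)) \<in> borel \<rightarrow>\<^sub>M borel" by measurable
    from measurable_sets[OF this that] have "(\<lambda>x::'a. (0::real, x)) -` B \<in> sets borel" by simp
    moreover have "{x. g x = 0} \<in> sets borel" by measurable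
    ultimately have "(\<lambda>x::'a. (0::real, x)) -` B \<inter> {x. g x = 0} \<in> sets borel" by auto
    moreover have "ZB B = (\<lambda>x::'a. (0::real, x)) -` B \<inter> {x. g x = 0}" unfolding ZB_def by auto
    ultimately show ?thesis by simp
  qed
  have inj_pt: "inj_on ?pt {p. g (snd p) \<noteq> 0}"
  proof (rule inj_onI)
    fix p q assume "p \<in> {p. g (snd p) \<noteq> 0}" "q \<in> {p. g (snd p) \<noteq> 0}" "?pt p = ?pt q"
    moreover obtain t x s y where "p = (t, x)" "q = (s, y)" by fastforce
    ultimately have "x = y" "g x \<noteq> 0" "t * g x / f x = s * g x / f x"
      by (auto simp: perturb_def)
    moreover have "f x \<noteq> 0" using \<open>g x \<noteq> 0\<close> supp by blast
    ultimately show "p = q" using \<open>p = (t, x)\<close> \<open>q = (s, y)\<close> by auto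
  qed
  have decomp: "npts (?pt ` S \<inter> B) = npts (S \<inter> C B) + npts (snd ` (S \<inter> (UNIV \<times> ZB B)))" for S B
  proof -
    have eq: "?pt ` S \<inter> B = ?pt ` (S \<inter> C B) \<union> (\<lambda>x. (0::real, x)) ` snd ` (S \<inter> (UNIV \<times> ZB B))"
    proof (intro equalityI subsetI)
      fix z assume z: "z \<in> ?pt ` S \<inter> B"
      then obtain t x where tx: "(t, x) \<in> S" "z = ?pt (t, x)" "z \<in> B" by auto
      show "z \<in> ?pt ` (S \<inter> C B) \<union> (\<lambda>x. (0::real, x)) ` snd ` (S \<inter> (UNIV \<times> ZB B))"
      proof (cases "g x = 0")
        case True
        then have "z = (0, x)" using tx by (simp add: perturb_def)
        then have "(t, x) \<in> S \<inter> (UNIV \<times> ZB B)" using tx True by (auto simp: ZB_def)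
        then have "x \<in> snd ` (S \<inter> (UNIV \<times> ZB B))" by (metis image_eqI snd_conv)
        then show ?thesis using \<open>z = (0, x)\<close> by blast
      next
        case False
        then show ?thesis using tx by (auto simp: C_def)
      qed
    next
      fix z assume "z \<in> ?pt ` (S \<inter> C B) \<union> (\<lambda>x. (0::real, x)) ` snd ` (S \<inter> (UNIV \<times> ZB B))"
      then show "z \<in> ?pt ` S \<inter> B"
      proof
        assume "z \<in> ?pt ` (S \<inter> C B)" then show ?thesis by (auto simp: C_def)
      next
        assume "z \<in> (\<lambda>x. (0::real, x)) ` snd ` (S \<inter> (UNIV \<times> ZB B))"
        then obtain t x where tx: "(t, x) \<in> S" "g x = 0" "(0, x) \<in> B" "z = (0, x)"
          by (auto simp: ZB_def)
        then have "f x = 0" using supp by blast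
        then have "?pt (t, x) = (0, x)" using tx by (simp add: perturb_def)
        then show ?thesis using tx by (metis IntI image_eqI)
      qed
    qed
    have disj: "?pt ` (S \<inter> C B) \<inter> (\<lambda>x. (0::real, x)) ` snd ` (S \<inter> (UNIV \<times> ZB B)) = {}"
      by (auto simp: C_def ZB_def perturb_def)
    have "npts (?pt ` S \<inter> B) = npts (?pt ` (S \<inter> C B)) + npts ((\<lambda>x. (0::real, x)) ` snd ` (S \<inter> (UNIV \<times> ZB B)))"
      unfolding eq npts_def by (rule plus_emeasure[symmetric]) (use disj in auto)
    also have "npts (?pt ` (S \<inter> C B)) = npts (S \<inter> C B)"
      by (rule npts_inj, rule inj_on_subset[OF inj_pt]) (auto simp: C_def)
    also have "npts ((\<lambda>x. (0::real, x)) ` snd ` (S \<inter> (UNIV \<times> ZB B))) = npts (snd ` (S \<inter> (UNIV \<times> ZB B)))"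
      by (rule npts_inj) (auto simp: inj_on_def)
    finally show ?thesis .
  qed
  have N'm: "(\<lambda>\<omega>. npts (?pt ` R \<omega> \<inter> B)) \<in> borel_measurable M" if B: "B \<in> sets borel" for B
    unfolding decomp
    by (intro borel_measurable_add Rm Cb B proj_count_measurable ZBb) auto
  have N'ae: "AE \<omega> in M. npts (R \<omega> \<inter> C B) = npts (?pt ` R \<omega> \<inter> B)" for B
    using Om
  proof eventually_elim
    case (elim \<omega>)
    then have "R \<omega> \<inter> (UNIV \<times> ZB B) = {}" by (auto simp: ZB_def)
    then show ?case unfolding decomp by (simp add: npts_def)
  qed
  have nuC: "emeasure (lebesgue_pos \<Otimes>\<^sub>M ?Q) (C B) = emeasure (lebesgue_pos \<Otimes>\<^sub>M ?P) B"
    if "B \<in> sets borel" for B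
    unfolding C_def by (rule pair_preimage[OF s\<mu> fm gm f0 g0 Qfin Pfin supp that])
  have ppR': "poisson_process M (\<lambda>\<omega>. ?pt ` R \<omega>) (lebesgue_pos \<Otimes>\<^sub>M ?P)"
    unfolding poisson_process_def
  proof (intro conjI ballI allI impI)
    fix \<omega> assume "\<omega> \<in> space M" then show "countable (?pt ` R \<omega>)" using Rcount by auto
  next
    fix B :: "(real \<times> 'a) set" assume B: "B \<in> sets borel"
    show "poisson_count M (\<lambda>\<omega>. npts (?pt ` R \<omega> \<inter> B)) (emeasure (lebesgue_pos \<Otimes>\<^sub>M ?P) B)"
      using poisson_count_AE[OF Rpc[OF Cb[OF B]] N'm[OF B] N'ae[of B]] nuC[OF B] by simp
  next
    fix m :: nat and A :: "nat \<Rightarrow> (real \<times> 'a) set"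
    assume A: "(\<forall>j<m. A j \<in> sets borel) \<and> disjoint_family_on A {..<m}"
    have "(\<forall>j<m. C (A j) \<in> sets borel) \<and> disjoint_family_on (\<lambda>j. C (A j)) {..<m}"
      using A Cb unfolding disjoint_family_on_def C_def by blast
    then have "indep_vars (\<lambda>_. borel) (\<lambda>j \<omega>. npts (R \<omega> \<inter> C (A j))) {..<m}" by (rule Rind)
    then show "indep_vars (\<lambda>_. borel) (\<lambda>j \<omega>. npts (?pt ` R \<omega> \<inter> A j)) {..<m}"
      by (rule indep_vars_AE[OF PM]) (use A N'm N'ae in auto)
  qed
  have pos': "AE \<omega> in M. ?pt ` R \<omega> \<subseteq> {0<..} \<times> UNIV"
    using Om
  proof eventually_elim
    case (elim \<omega>)
    show ?case
    proof
      fix z assume "z \<in> ?pt ` R \<omega>"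
      then obtain t x where tx: "(t, x) \<in> R \<omega>" "z = ?pt (t, x)" by auto
      then have "t > 0" "g x \<noteq> 0" using elim by auto
      moreover have "f x \<noteq> 0" using \<open>g x \<noteq> 0\<close> supp by blast
      ultimately show "z \<in> {0<..} \<times> UNIV" using tx f0[of x] g0[of x]
        by (auto simp: perturb_def)
    qed
  qed
  have dist: "AE \<omega> in M. \<forall>p\<in>?pt ` R \<omega>. \<forall>q\<in>?pt ` R \<omega>. fst p = fst q \<longrightarrow> p = q"
    by (rule distinct_times[OF PM ppR']) (use s\<mu> Pfin pos' in auto)
  show ?thesis unfolding exp_race_def
    using ppR' pos' dist by (auto elim: AE_mp)
qed

end
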